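(* If an analytic function $f(z)=\sum_{n\ge0}f_nz^n$ on $\mathbb{D}$ satisfies $\sup_{n\ge0}|f_n|e^{c\sqrt n}<\infty$ for some $c>0$, then for every $h\in H^\infty$ the function $T_{\overline h}f$ also satisfies $\sup_{n\ge0}|(T_{\overline h}f)_n|e^{c''\sqrt n}<\infty$ for some $c''>0$, where $(T_{\overline h}f)_n$ are its Taylor coefficients.
   Context: $H^\infty$ is the algebra of bounded analytic functions on $\mathbb{D}$. For $h\in H^\infty$ and $f\in H^2$, $T_{\overline h}f=P_+(\overline hf)$, where $P_+:L^2(\mathbb{T})\to H^2$ is the orthogonal projection onto the Hardy space (such $f$ lies in $H^2$). *)

theory Defs
  imports "HOL-Analysis.Analysis"
begin

definition taylor_coeff :: "(complex \<Rightarrow> complex) \<Rightarrow> nat \<Rightarrow> complex" where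
  "taylor_coeff f n = (deriv ^^ n) f 0 / fact n"

definition Hinf :: "(complex \<Rightarrow> complex) set" where
  "Hinf = {h. h holomorphic_on ball 0 1 \<and> bounded (h ` ball 0 1)}"

text \<open>Co-analytic Toeplitz operator T_{conj h} f = P_+(conj h * f).  In the
  orthonormal basis z^n of H^2, the n-th Fourier coefficient of conj h * f is
  sum_k conj(h_k) f_(n+k); P_+ keeps the coefficients with n >= 0.  The result is
  the analytic function on the disc with these Taylor coefficients.\<close>
definition toeplitz_conj_coeff ::
  "(complex \<Rightarrow> complex) \<Rightarrow> (complex \<Rightarrow> complex) \<Rightarrow> nat \<Rightarrow> complex" where
  "toeplitz_conj_coeff h f n = (\<Sum>k. cnj (taylor_coeff h k) * taylor_coeff f (n + k))"

definition toeplitz_conj ::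
  "(complex \<Rightarrow> complex) \<Rightarrow> (complex \<Rightarrow> complex) \<Rightarrow> complex \<Rightarrow> complex" where
  "toeplitz_conj h f z = (\<Sum>n. toeplitz_conj_coeff h f n * z ^ n)"

end

theory Submission
  imports Defs "HOL-Complex_Analysis.Complex_Analysis"
begin

lemma exp_ge_pow4: fixes x :: real assumes "x \<ge> 0" shows "x^4 / 64 \<le> exp x"
proof -
  have "1 + x/2 + (x/2)^2/2 \<le> exp (x/2)" by (rule exp_lower_Taylor_quadratic) (use assms in simp)
  moreover have "(x/2)^2/2 = x^2/8" by (simp add: power_divide)
  ultimately have h: "x^2/8 \<le> exp (x/2)" using assms by linarith
  have "x^4/64 = (x^2/8)^2" by (simp add: power2_eq_square power4_eq_xxxx)
  also have "\<dots> \<le> exp (x/2) ^ 2" using h by (intro power_mono) auto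
  also have "\<dots> = exp x" by (simp add: power2_eq_square flip: exp_add)
  finally show ?thesis .
qed

lemma summable_exp_sqrt: fixes d :: real assumes "d > 0"
  shows "summable (\<lambda>n. exp (- d * sqrt (real n)))"
proof (rule summable_comparison_test')
  show "summable (\<lambda>n. 64 / d^4 * real n powr (-2))"
    by (intro summable_mult) (simp add: summable_real_powr_iff)
  fix n :: nat assume n: "n \<ge> 1"
  have "(d * sqrt n)^4 / 64 \<le> exp (d * sqrt n)" using assms by (intro exp_ge_pow4) auto
  moreover have "(d * sqrt n)^4 = d^4 * real n^2"
    by (simp add: power_mult_distrib power4_eq_xxxx power2_eq_square)
  ultimately have e: "d^4 * real n^2 / 64 \<le> exp (d * sqrt n)" by simp
  have pos: "0 < d^4 * real n^2 / 64" using assms n by simp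
  have "exp (- d * sqrt n) = inverse (exp (d * sqrt n))" by (simp add: exp_minus)
  also have "\<dots> \<le> inverse (d^4 * real n^2 / 64)" using e pos by (intro le_imp_inverse_le) auto
  also have "\<dots> = 64 / d^4 * real n powr (-2)" using n
    by (simp add: powr_minus powr_numeral divide_simps)
  finally show "norm (exp (- d * sqrt (real n))) \<le> 64 / d^4 * real n powr (-2)" by simp
qed

lemma Hinf_coeff_bound: assumes "h \<in> Hinf" shows "\<exists>B\<ge>0. \<forall>k. norm (taylor_coeff h k) \<le> B"
proof -
  from assms have hol: "h holomorphic_on ball 0 1" and bd: "bounded (h ` ball 0 1)" by (auto simp: Hinf_def)
  then obtain B where B: "\<And>z. z \<in> ball 0 1 \<Longrightarrow> norm (h z) \<le> B" unfolding bounded_iff by blast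
  have B0: "B \<ge> 0" using B[of 0] by (smt (verit) centre_in_ball norm_ge_zero zero_less_one)
  have "norm (taylor_coeff h k) \<le> B" for k
  proof (rule tendsto_le[of "at_left (1::real)"])
    show "((\<lambda>r. B / r^k) \<longlongrightarrow> B) (at_left 1)"
    proof -
      have "((\<lambda>r. B / r^k) \<longlongrightarrow> B / 1^k) (at_left (1::real))"
        by (intro tendsto_intros) auto
      thus ?thesis by simp
    qed
    show "((\<lambda>r. norm (taylor_coeff h k)) \<longlongrightarrow> norm (taylor_coeff h k)) (at_left 1)" by simp
    show "\<forall>\<^sub>F r in at_left 1. norm (taylor_coeff h k) \<le> B / r^k"
      using eventually_at_left_real[of 0 "1::real", OF zero_less_one]
    proof (rule eventually_mono)
      fix r :: real assume r: "r \<in> {0<..<1}"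
      have "norm ((deriv ^^ k) h 0) \<le> fact k * B / r^k"
      proof (rule Cauchy_inequality)
        show "h holomorphic_on ball 0 r" using r by (intro holomorphic_on_subset[OF hol]) auto
        show "continuous_on (cball 0 r) h" using r
          by (intro holomorphic_on_imp_continuous_on holomorphic_on_subset[OF hol]) auto
        show "0 < r" using r by auto
        show "norm (h x) \<le> B" if "norm (0 - x) = r" for x using that r by (intro B) auto
      qed
      hence "norm ((deriv ^^ k) h 0) / fact k \<le> fact k * B / r^k / fact k"
        by (intro divide_right_mono) auto
      thus "norm (taylor_coeff h k) \<le> B / r^k"
        by (simp add: taylor_coeff_def norm_divide)
    qed
  qed auto
  with B0 show ?thesis by blast
qed

theorem mainTheorem15:
  fixes f :: "complex \<Rightarrow> complex" and c :: real
  assumes "f holomorphic_on ball 0 1"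
    and "c > 0"
    and "\<exists>M. \<forall>n. norm (taylor_coeff f n) * exp (c * sqrt (real n)) \<le> M"
  shows "\<forall>h \<in> Hinf. \<exists>c''>0. \<exists>M. \<forall>n.
           norm (taylor_coeff (toeplitz_conj h f) n) * exp (c'' * sqrt (real n)) \<le> M"
proof
  fix h assume h: "h \<in> Hinf"
  obtain B where B0: "B \<ge> 0" and B: "\<And>k. norm (taylor_coeff h k) \<le> B"
    using Hinf_coeff_bound[OF h] by blast
  obtain M where M: "\<And>n. norm (taylor_coeff f n) * exp (c * sqrt (real n)) \<le> M"
    using assms(3) by blast
  have M0: "M \<ge> 0" using M[of 0] by (smt (verit) exp_gt_zero norm_ge_zero zero_le_mult_iff)
  define d where "d = c / 2"
  have d: "d > 0" using assms(2) by (simp add: d_def)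
  define S where "S = (\<Sum>k. exp (- d * sqrt (real k)))"
  have sumS: "summable (\<lambda>k. exp (- d * sqrt (real k)))" by (rule summable_exp_sqrt[OF d])
  have S0: "S \<ge> 0" unfolding S_def by (intro suminf_nonneg[OF sumS]) auto
  have fa: "norm (taylor_coeff f m) \<le> M * exp (- c * sqrt (real m))" for m
  proof -
    have "norm (taylor_coeff f m) = norm (taylor_coeff f m) * exp (c * sqrt (real m)) * exp (- c * sqrt (real m))"
      by (simp add: mult.assoc flip: exp_add)
    also have "\<dots> \<le> M * exp (- c * sqrt (real m))" using M[of m] by (intro mult_right_mono) auto
    finally show ?thesis .
  qed
  define b where "b = toeplitz_conj_coeff h f"
  have bbound: "norm (b n) \<le> B * M * S * exp (- d * sqrt (real n))" for n
  proof -
    have t: "norm (cnj (taylor_coeff h k) * taylor_coeff f (n + k))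
          \<le> (B * M * exp (- d * sqrt (real n))) * exp (- d * sqrt (real k))" for k
    proof -
      have "exp (- c * sqrt (real (n + k))) \<le> exp (- d * sqrt (real n)) * exp (- d * sqrt (real k))"
      proof -
        have "d * sqrt (real n) \<le> d * sqrt (real (n+k))" "d * sqrt (real k) \<le> d * sqrt (real (n+k))"
          using d by (intro mult_left_mono; simp)+
        moreover have "c = d + d" by (simp add: d_def)
        ultimately have "- c * sqrt (real (n + k)) \<le> - d * sqrt (real n) + - d * sqrt (real k)"
          by (simp add: algebra_simps)
        thus ?thesis by (simp flip: exp_add)
      qed
      hence "norm (taylor_coeff h k) * norm (taylor_coeff f (n + k)) \<le> B * (M * (exp (- d * sqrt (real n)) * exp (- d * sqrt (real k))))"
        using B[of k] fa[of "n+k"] M0 B0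
        by (intro mult_mono order.trans[OF fa] mult_left_mono) auto
      thus ?thesis by (simp add: norm_mult mult_ac)
    qed
    have "norm (b n) \<le> (\<Sum>k. (B * M * exp (- d * sqrt (real n))) * exp (- d * sqrt (real k)))"
      unfolding b_def toeplitz_conj_coeff_def
      by (rule norm_suminf_le[OF t]) (intro summable_mult sumS)
    also have "\<dots> = B * M * exp (- d * sqrt (real n)) * S"
      unfolding S_def by (rule suminf_mult[OF sumS])
    finally show ?thesis by (simp add: mult_ac)
  qed
  have bb: "norm (b n) * exp (d * sqrt (real n)) \<le> B * M * S" for n
  proof -
    have "norm (b n) * exp (d * sqrt (real n)) \<le> B * M * S * exp (- d * sqrt (real n)) * exp (d * sqrt (real n))"
      by (intro mult_right_mono bbound) auto
    also have "\<dots> = B * M * S" by (simp add: mult.assoc flip: exp_add)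
    finally show ?thesis .
  qed
  define F where "F = Abs_fps b"
  have eq: "toeplitz_conj h f = eval_fps F"
    by (rule ext) (simp add: toeplitz_conj_def eval_fps_def F_def b_def)
  have "summable (\<lambda>n. fps_nth F n * (1/2) ^ n)"
  proof (rule summable_norm_cancel, rule summable_comparison_test)
    show "summable (\<lambda>n. B * M * S * (1/2::real) ^ n)" by (intro summable_mult) auto
    show "\<exists>N. \<forall>n\<ge>N. norm (norm (fps_nth F n * (1/2) ^ n)) \<le> B * M * S * (1/2) ^ n"
    proof (intro exI allI impI)
      fix n
      have "exp (- d * sqrt (real n)) \<le> 1" using d by auto
      hence "norm (b n) \<le> B * M * S" using bbound[of n] B0 M0 S0
        by (smt (verit) mult_left_le mult_nonneg_nonneg)
      thus "norm (norm (fps_nth F n * (1/2) ^ n)) \<le> B * M * S * (1/2) ^ n"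
        by (simp add: F_def norm_mult norm_power mult_right_mono)
    qed
  qed
  hence "fps_conv_radius F \<ge> norm (1/2 :: complex)" unfolding fps_conv_radius_def by (rule conv_radius_geI)
  hence "fps_conv_radius F > 0" by (rule less_le_trans[rotated]) simp
  hence exp: "eval_fps F has_fps_expansion F" by (rule eval_fps_has_fps_expansion)
  have tc: "taylor_coeff (toeplitz_conj h f) n = b n" for n
    using fps_nth_fps_expansion[OF exp, of n] by (simp add: eq taylor_coeff_def F_def)
  show "\<exists>c''>0. \<exists>M. \<forall>n. norm (taylor_coeff (toeplitz_conj h f) n) * exp (c'' * sqrt (real n)) \<le> M"
    using d bb by (auto simp: tc)
qed

end
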